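(* Let $\mathcal{H}$ be a finite-dimensional complex Hilbert space and let $L(\mathcal{H})$ be the space of linear operators on $\mathcal{H}$ with the Hilbert–Schmidt inner product. Let $U$ be a unitary operator on $\mathcal{H}$ and $A_1,\dots,A_n$ operators on $\mathcal{H}$ forming unital measurements, i.e. $\sum_jA_j^*A_j=I$ and $\sum_jA_jA_j^*=I$. Define linear maps on $L(\mathcal{H})$ by $C(\rho)=U\rho U^*$, $D(\rho)=\sum_{j=1}^nA_j\rho A_j^*$, and $\mathcal{L}(\rho)=qC(\rho)+pD(\rho)$ with $0<p,q<1$, $p+q=1$. If $\lambda=1$ is the only eigenvalue of $D$ with $|\lambda|=1$, then $\lambda=1$ is the only eigenvalue of $\mathcal{L}$ with $|\lambda|=1$. Moreover, if $1$ is an eigenvalue of $D$ of algebraic multiplicity $1$, then $1$ is an eigenvalue of $\mathcal{L}$ of algebraic multiplicity $1$. *)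

theory Defs
  imports "Jordan_Normal_Form.Schur_Decomposition" "Jordan_Normal_Form.Char_Poly"
begin

text \<open>Operators on the n-dimensional complex Hilbert space H = C^n are n x n complex
matrices; L(H) is carrier_mat n n. Superoperators are maps complex mat => complex mat.\<close>

fun msum :: "nat \<Rightarrow> (nat \<Rightarrow> complex mat) \<Rightarrow> nat \<Rightarrow> complex mat" where
  "msum n f 0 = 0\<^sub>m n n"
| "msum n f (Suc k) = msum n f k + f k"

definition unitary_op :: "nat \<Rightarrow> complex mat \<Rightarrow> bool" where
  "unitary_op n U \<longleftrightarrow> U \<in> carrier_mat n n \<and> U * mat_adjoint U = 1\<^sub>m n \<and> mat_adjoint U * U = 1\<^sub>m n"

definition so_eigenvalue :: "nat \<Rightarrow> (complex mat \<Rightarrow> complex mat) \<Rightarrow> complex \<Rightarrow> bool" where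
  "so_eigenvalue n T l \<longleftrightarrow> (\<exists>\<rho> \<in> carrier_mat n n. \<rho> \<noteq> 0\<^sub>m n n \<and> T \<rho> = l \<cdot>\<^sub>m \<rho>)"

definition mat_unit :: "nat \<Rightarrow> nat \<Rightarrow> nat \<Rightarrow> complex mat" where
  "mat_unit n k l = mat n n (\<lambda>(i,j). if i = k \<and> j = l then 1 else 0)"

text \<open>Matrix of a linear map T on L(H) with respect to the basis of matrix units,
  index (i,j) encoded as i*n+j.\<close>
definition so_matrix :: "nat \<Rightarrow> (complex mat \<Rightarrow> complex mat) \<Rightarrow> complex mat" where
  "so_matrix n T = mat (n*n) (n*n)
     (\<lambda>(r,c). T (mat_unit n (c div n) (c mod n)) $$ (r div n, r mod n))"

definition alg_mult :: "nat \<Rightarrow> (complex mat \<Rightarrow> complex mat) \<Rightarrow> complex \<Rightarrow> nat" where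
  "alg_mult n T l = order l (char_poly (so_matrix n T))"

end

theory Submission
  imports Defs "Jordan_Normal_Form.Jordan_Normal_Form_Uniqueness" "Jordan_Normal_Form.Jordan_Normal_Form_Existence"
begin


lemma adj_dim[simp]: "dim_row (mat_adjoint (A::complex mat)) = dim_col A" "dim_col (mat_adjoint A) = dim_row A"
  by (simp_all add: mat_adjoint_def)

lemma adj_carrier[simp]: assumes "(A::complex mat) \<in> carrier_mat a b" shows "mat_adjoint A \<in> carrier_mat b a"
proof (rule carrier_matI)
  show "dim_row (mat_adjoint A) = b" using carrier_matD(2)[OF assms] by (simp only: adj_dim)
  show "dim_col (mat_adjoint A) = a" using carrier_matD(1)[OF assms] by (simp only: adj_dim)
qed

lemma adj_index[simp]: "i < dim_col A \<Longrightarrow> j < dim_row A \<Longrightarrow> mat_adjoint (A::complex mat) $$ (i,j) = cnj (A $$ (j,i))"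
  unfolding mat_adjoint_def mat_of_rows_def by (subst index_mat, simp, simp, simp)

lemma adj_adj[simp]: "mat_adjoint (mat_adjoint (A::complex mat)) = A"
  by (rule eq_matI, simp_all)

lemma adj_mult: assumes A: "(A::complex mat) \<in> carrier_mat a b" and B: "B \<in> carrier_mat b c" shows
   "mat_adjoint (A * B) = mat_adjoint B * mat_adjoint A"
  using carrier_matD[OF A] carrier_matD[OF B]
  by (intro eq_matI, simp_all add: scalar_prod_def cnj_sum mult.commute)

lemma adj_add: assumes A: "(A::complex mat) \<in> carrier_mat a b" and B: "B \<in> carrier_mat a b" shows
   "mat_adjoint (A + B) = mat_adjoint A + mat_adjoint B"
  using carrier_matD[OF A] carrier_matD[OF B] by (intro eq_matI, simp_all)

lemma adj_smult: "mat_adjoint (c \<cdot>\<^sub>m (A::complex mat)) = cnj c \<cdot>\<^sub>m mat_adjoint A"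
  by (rule eq_matI, simp_all)

lemma adj_one[simp]: "mat_adjoint (1\<^sub>m n :: complex mat) = 1\<^sub>m n"
  by (rule eq_matI, simp_all)

lemma adj_zero[simp]: "mat_adjoint (0\<^sub>m a b :: complex mat) = 0\<^sub>m b a"
  by (rule eq_matI, simp_all)

lemma mcar[simp]: "(A::complex mat) \<in> carrier_mat n n \<Longrightarrow> B \<in> carrier_mat n n \<Longrightarrow> A * B \<in> carrier_mat n n"
  by (rule mult_carrier_mat)

lemma one_mult_n[simp]: "(A::complex mat) \<in> carrier_mat n n \<Longrightarrow> 1\<^sub>m n * A = A" by (rule left_mult_one_mat)
lemma mult_one_n[simp]: "(A::complex mat) \<in> carrier_mat n n \<Longrightarrow> A * 1\<^sub>m n = A" by (rule right_mult_one_mat)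

definition tr :: "complex mat \<Rightarrow> complex" where "tr A = (\<Sum>i<dim_row A. A $$ (i,i))"

lemma tr_comm: "(A::complex mat) \<in> carrier_mat a b \<Longrightarrow> B \<in> carrier_mat b a \<Longrightarrow> tr (A * B) = tr (B * A)"
proof -
  assume A: "A \<in> carrier_mat a b" and B: "B \<in> carrier_mat b a"
  have "tr (A * B) = (\<Sum>i<a. \<Sum>k<b. A $$ (i,k) * B $$ (k,i))"
    using A B unfolding tr_def by (simp add: carrier_matD scalar_prod_def atLeast0LessThan)
  also have "\<dots> = (\<Sum>k<b. \<Sum>i<a. B $$ (k,i) * A $$ (i,k))"
    by (subst sum.swap, simp add: mult.commute)
  also have "\<dots> = tr (B * A)"
    using A B unfolding tr_def by (simp add: carrier_matD scalar_prod_def atLeast0LessThan)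
  finally show ?thesis .
qed

lemma tr_add: "(A::complex mat) \<in> carrier_mat a a \<Longrightarrow> B \<in> carrier_mat a a \<Longrightarrow> tr (A + B) = tr A + tr B"
  unfolding tr_def by (simp add: carrier_matD sum.distrib)

lemma tr_smult: "A \<in> carrier_mat a a \<Longrightarrow> tr (c \<cdot>\<^sub>m A) = c * tr A"
  unfolding tr_def by (simp add: carrier_matD sum_distrib_left)

lemma tr_one: "tr (1\<^sub>m a) = of_nat a" unfolding tr_def by simp

lemma msum_carrier[simp]: "(\<And>k. k<m \<Longrightarrow> f k \<in> carrier_mat n n) \<Longrightarrow> msum n f m \<in> carrier_mat n n"
proof (induct m)
  case (Suc m)
  have "msum n f m \<in> carrier_mat n n" by (rule Suc(1), rule Suc(2), simp)
  moreover have "f m \<in> carrier_mat n n" by (rule Suc(2), simp)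
  ultimately show ?case by simp
qed simp

lemma msum_index: "(\<And>k. k<m \<Longrightarrow> f k \<in> carrier_mat n n) \<Longrightarrow> i < n \<Longrightarrow> j < n \<Longrightarrow>
   msum n f m $$ (i,j) = (\<Sum>k<m. f k $$ (i,j))"
proof (induct m)
  case (Suc m)
  have M: "msum n f m \<in> carrier_mat n n" by (rule msum_carrier, rule Suc(2), simp)
  have F: "f m \<in> carrier_mat n n" by (rule Suc(2), simp)
  have "(msum n f m + f m) $$ (i,j) = msum n f m $$ (i,j) + f m $$ (i,j)"
    using M F Suc(3,4) by (simp add: carrier_matD)
  moreover have "msum n f m $$ (i,j) = (\<Sum>k<m. f k $$ (i,j))"
    by (rule Suc(1), rule Suc(2), simp, rule Suc(3), rule Suc(4))
  ultimately show ?case by simp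
qed simp

lemma msum_cong: "(\<And>k. k<m \<Longrightarrow> f k = g k) \<Longrightarrow> msum n f m = msum n g m"
  by (induct m, simp_all)

lemma tr_msum: "(\<And>k. k<m \<Longrightarrow> f k \<in> carrier_mat n n) \<Longrightarrow> P \<in> carrier_mat n n \<Longrightarrow> Q \<in> carrier_mat n n \<Longrightarrow>
   tr (P * msum n f m * Q) = (\<Sum>k<m. tr (P * f k * Q))"
proof (induct m)
  case 0 then show ?case by (simp add: tr_def carrier_matD)
next
  case (Suc m)
  have M: "msum n f m \<in> carrier_mat n n" by (rule msum_carrier, rule Suc(2), simp)
  have F: "f m \<in> carrier_mat n n" by (rule Suc(2), simp)
  have IH: "tr (P * msum n f m * Q) = (\<Sum>k<m. tr (P * f k * Q))"
    by (rule Suc(1), rule Suc(2), simp, rule Suc(3), rule Suc(4))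
  have PM: "P * msum n f m \<in> carrier_mat n n" "P * f m \<in> carrier_mat n n"
    using M F Suc(3) by (simp_all add: mult_carrier_mat)
  have "P * (msum n f m + f m) = P * msum n f m + P * f m"
    by (rule mult_add_distrib_mat[OF Suc(3) M F])
  hence "P * (msum n f m + f m) * Q = (P * msum n f m + P * f m) * Q" by simp
  also have "\<dots> = P * msum n f m * Q + P * f m * Q"
    by (rule add_mult_distrib_mat[OF PM Suc(4)])
  finally have E: "P * msum n f (Suc m) * Q = P * msum n f m * Q + P * f m * Q" by (simp only: msum.simps)
  have T: "tr (P * msum n f m * Q + P * f m * Q) = tr (P * msum n f m * Q) + tr (P * f m * Q)"
    by (rule tr_add[of _ n]) (use PM Suc(4) in simp_all)
  show ?case by (simp only: E T IH sum.lessThan_Suc)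
qed

lemma adj_msum: "(\<And>k. k<m \<Longrightarrow> f k \<in> carrier_mat n n) \<Longrightarrow>
   mat_adjoint (msum n f m) = msum n (\<lambda>k. mat_adjoint (f k)) m"
proof (induct m)
  case (Suc m)
  have M: "msum n f m \<in> carrier_mat n n" by (rule msum_carrier, rule Suc(2), simp)
  have F: "f m \<in> carrier_mat n n" by (rule Suc(2), simp)
  have "mat_adjoint (msum n f (Suc m)) = mat_adjoint (msum n f m) + mat_adjoint (f m)"
    using adj_add[OF M F] by simp
  moreover have "mat_adjoint (msum n f m) = msum n (\<lambda>k. mat_adjoint (f k)) m"
    by (rule Suc(1), rule Suc(2), simp)
  ultimately show ?case by simp
qed simp




definition hs :: "complex mat \<Rightarrow> complex mat \<Rightarrow> complex" where
  "hs X Y = tr (mat_adjoint X * Y)"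

lemma hs_entries: "X \<in> carrier_mat n n \<Longrightarrow> Y \<in> carrier_mat n n \<Longrightarrow>
  hs X Y = (\<Sum>i<n. \<Sum>k<n. cnj (X $$ (k,i)) * Y $$ (k,i))"
proof -
  assume X: "X \<in> carrier_mat n n" and Y: "Y \<in> carrier_mat n n"
  show ?thesis unfolding hs_def tr_def using carrier_matD[OF X] carrier_matD[OF Y]
    by (simp add: scalar_prod_def atLeast0LessThan)
qed

lemma hs_self: "X \<in> carrier_mat n n \<Longrightarrow> hs X X = of_real (\<Sum>i<n. \<Sum>k<n. (cmod (X $$ (k,i)))^2)"
proof -
  have e: "\<And>z. cnj z * z = complex_of_real ((cmod z)^2)" by (metis complex_norm_square mult.commute)
  assume "X \<in> carrier_mat n n" thus ?thesis by (simp add: hs_entries[of X n X] e del: of_real_power)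
qed

lemma hs_self_nonneg: "X \<in> carrier_mat n n \<Longrightarrow> Re (hs X X) \<ge> 0"
  by (simp add: hs_self sum_nonneg)

lemma hs_self_real: "X \<in> carrier_mat n n \<Longrightarrow> hs X X = of_real (Re (hs X X))"
  by (simp add: hs_self)

lemma hs_self_zero: assumes X: "X \<in> carrier_mat n n" and z: "Re (hs X X) = 0"
  shows "X = 0\<^sub>m n n"
proof (rule eq_matI)
  fix k i assume k: "k < dim_row (0\<^sub>m n n)" and i: "i < dim_col (0\<^sub>m n n)"
  have "(\<Sum>i<n. \<Sum>k<n. (cmod (X $$ (k,i)))^2) = 0" using z X by (simp add: hs_self)
  hence "\<forall>i\<in>{..<n}. (\<Sum>k<n. (cmod (X $$ (k,i)))^2) = 0"
    by (subst sum_nonneg_eq_0_iff[symmetric], simp_all add: sum_nonneg)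
  hence "(\<Sum>k<n. (cmod (X $$ (k,i)))^2) = 0" using i by simp
  hence "\<forall>k\<in>{..<n}. (cmod (X $$ (k,i)))^2 = 0"
    by (subst sum_nonneg_eq_0_iff[symmetric], simp_all)
  thus "X $$ (k,i) = 0\<^sub>m n n $$ (k,i)" using k i by simp
qed (use carrier_matD[OF X] in simp_all)

lemma hs_add_left: "X \<in> carrier_mat n n \<Longrightarrow> Y \<in> carrier_mat n n \<Longrightarrow> Z \<in> carrier_mat n n \<Longrightarrow>
  hs (X + Y) Z = hs X Z + hs Y Z"
  by (simp add: hs_entries[of _ n] sum.distrib distrib_right)

lemma hs_add_right: "X \<in> carrier_mat n n \<Longrightarrow> Y \<in> carrier_mat n n \<Longrightarrow> Z \<in> carrier_mat n n \<Longrightarrow>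
  hs Z (X + Y) = hs Z X + hs Z Y"
  by (simp add: hs_entries[of _ n] sum.distrib distrib_left)

lemma hs_minus_left: "X \<in> carrier_mat n n \<Longrightarrow> Y \<in> carrier_mat n n \<Longrightarrow> Z \<in> carrier_mat n n \<Longrightarrow>
  hs (X - Y) Z = hs X Z - hs Y Z"
  by (simp add: minus_carrier_mat hs_entries[of "X - Y" n Z] hs_entries[of X n Z] hs_entries[of Y n Z] sum_subtractf left_diff_distrib)

lemma hs_minus_right: "X \<in> carrier_mat n n \<Longrightarrow> Y \<in> carrier_mat n n \<Longrightarrow> Z \<in> carrier_mat n n \<Longrightarrow>
  hs Z (X - Y) = hs Z X - hs Z Y"
  by (simp add: minus_carrier_mat hs_entries[of Z n "X - Y"] hs_entries[of Z n X] hs_entries[of Z n Y] sum_subtractf right_diff_distrib)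

lemma hs_smult_left: "X \<in> carrier_mat n n \<Longrightarrow> Z \<in> carrier_mat n n \<Longrightarrow>
  hs (c \<cdot>\<^sub>m X) Z = cnj c * hs X Z"
  by (simp add: hs_entries[of _ n] sum_distrib_left mult.assoc)

lemma hs_smult_right: "X \<in> carrier_mat n n \<Longrightarrow> Z \<in> carrier_mat n n \<Longrightarrow>
  hs Z (c \<cdot>\<^sub>m X) = c * hs Z X"
  by (simp add: hs_entries[of _ n] sum_distrib_left mult.left_commute)

lemma hs_sym: "X \<in> carrier_mat n n \<Longrightarrow> Z \<in> carrier_mat n n \<Longrightarrow> hs Z X = cnj (hs X Z)"
  by (simp add: hs_entries[of _ n] cnj_sum mult.commute)

lemma arith_aux: fixes a b d p q :: real
  assumes h: "a = q*q*a + p*p*b + q*p*(a+b-d)" and pq: "p+q=1" "0<p" "0<q" and ab: "b \<le> a" and d: "0 \<le> d"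
  shows "d = 0"
proof -
  have q: "q = 1 - p" using pq(1) by simp
  have "p * (a - b + q*d) = a - (q*q*a + p*p*b + q*p*(a+b-d))" unfolding q by (simp add: algebra_simps)
  hence "p * (a - b + q*d) = 0" using h by simp
  hence "a - b + q*d = 0" using pq(2) by simp
  moreover have "q * d \<ge> 0" using d pq(3) by simp
  ultimately have "q * d = 0" using ab by linarith
  thus "d = 0" using pq(3) by simp
qed

lemma mat_eq_of_minus_zero: "X \<in> carrier_mat n n \<Longrightarrow> Y \<in> carrier_mat n n \<Longrightarrow> X - Y = 0\<^sub>m n n \<Longrightarrow> X = (Y::complex mat)"
proof -
  assume X: "X \<in> carrier_mat n n" and Y: "Y \<in> carrier_mat n n" and z: "X - Y = 0\<^sub>m n n"
  show ?thesis
  proof (rule eq_matI)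
    fix i j assume i: "i < dim_row Y" and j: "j < dim_col Y"
    have "(X - Y) $$ (i,j) = 0" using z i j carrier_matD[OF Y] by simp
    thus "X $$ (i,j) = Y $$ (i,j)" using i j carrier_matD[OF X] carrier_matD[OF Y] by simp
  qed (use carrier_matD[OF X] carrier_matD[OF Y] in simp_all)
qed

lemma strict_conv:
  fixes X Y R :: "complex mat" and p q :: real
  assumes X: "X \<in> carrier_mat n n" and Y: "Y \<in> carrier_mat n n" and R: "R \<in> carrier_mat n n"
    and nX: "Re (hs X X) = Re (hs R R)" and nY: "Re (hs Y Y) \<le> Re (hs R R)"
    and eq: "c \<cdot>\<^sub>m R = complex_of_real q \<cdot>\<^sub>m X + complex_of_real p \<cdot>\<^sub>m Y"
    and c: "cmod c = 1" and pq: "0 < p" "0 < q" "p + q = 1"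
  shows "X = Y"
proof -
  let ?a = "Re (hs R R)" let ?b = "Re (hs Y Y)" let ?d = "Re (hs (X - Y) (X - Y))"
  let ?e = "Re (hs X Y + hs Y X)"
  have XY: "X - Y \<in> carrier_mat n n" using X Y by (simp add: minus_carrier_mat)
  have "hs (c \<cdot>\<^sub>m R) (c \<cdot>\<^sub>m R) = (cnj c * c) * hs R R"
    using R by (simp add: hs_smult_left hs_smult_right)
  also have "cnj c * c = 1" using c by (metis complex_norm_square mult.commute of_real_1 power_one)
  finally have e1: "Re (hs (c \<cdot>\<^sub>m R) (c \<cdot>\<^sub>m R)) = ?a" by simp
  have "hs (complex_of_real q \<cdot>\<^sub>m X + complex_of_real p \<cdot>\<^sub>m Y) (complex_of_real q \<cdot>\<^sub>m X + complex_of_real p \<cdot>\<^sub>m Y)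
     = of_real (q*q) * hs X X + of_real (p*p) * hs Y Y + of_real (q*p) * (hs X Y + hs Y X)"
    using X Y by (simp add: hs_add_left[of _ n] hs_add_right[of _ n] hs_smult_left hs_smult_right algebra_simps)
  hence e2: "Re (hs (c \<cdot>\<^sub>m R) (c \<cdot>\<^sub>m R)) = q*q*?a + p*p*?b + q*p*?e" using nX by (simp add: eq)
  have "hs (X - Y) (X - Y) = hs X X + hs Y Y - (hs X Y + hs Y X)"
    using X Y XY by (simp add: hs_minus_left[of _ n] hs_minus_right[of _ n] algebra_simps)
  hence e3: "?d = ?a + ?b - ?e" using nX by simp
  have d0: "?d \<ge> 0" using hs_self_nonneg[OF XY] .
  from e1 e2 e3 have "?a = q*q*?a + p*p*?b + q*p*(?a + ?b - ?d)" by simp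
  from arith_aux[OF this pq(3,1,2) nY d0] have "?d = 0" .
  from mat_eq_of_minus_zero[OF X Y hs_self_zero[OF XY this]] show "X = Y" .
qed




locale chan =
  fixes n m :: nat and U :: "complex mat" and A :: "nat \<Rightarrow> complex mat"
  assumes U: "unitary_op n U"
    and Ac: "\<forall>j<m. A j \<in> carrier_mat n n"
    and tp: "msum n (\<lambda>j. mat_adjoint (A j) * A j) m = 1\<^sub>m n"
    and un: "msum n (\<lambda>j. A j * mat_adjoint (A j)) m = 1\<^sub>m n"
begin

definition Dm :: "complex mat \<Rightarrow> complex mat" where
  "Dm \<rho> = msum n (\<lambda>j. A j * \<rho> * mat_adjoint (A j)) m"
definition Cm :: "complex mat \<Rightarrow> complex mat" where
  "Cm \<rho> = U * \<rho> * mat_adjoint U"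

lemma Uc[simp]: "U \<in> carrier_mat n n" using U unfolding unitary_op_def by simp
lemma UU: "mat_adjoint U * U = 1\<^sub>m n" "U * mat_adjoint U = 1\<^sub>m n" using U unfolding unitary_op_def by simp_all
lemma Ak[simp]: "k < m \<Longrightarrow> A k \<in> carrier_mat n n" using Ac by simp

lemma Dm_carrier[simp]: "\<rho> \<in> carrier_mat n n \<Longrightarrow> Dm \<rho> \<in> carrier_mat n n"
  unfolding Dm_def by (rule msum_carrier) simp
lemma Cm_carrier[simp]: "\<rho> \<in> carrier_mat n n \<Longrightarrow> Cm \<rho> \<in> carrier_mat n n"
  unfolding Cm_def by simp

lemma tr_cyc3: "X \<in> carrier_mat n n \<Longrightarrow> Y \<in> carrier_mat n n \<Longrightarrow> Z \<in> carrier_mat n n \<Longrightarrow>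
  tr (X * Y * Z) = tr (Y * Z * X)"
proof -
  assume X: "X \<in> carrier_mat n n" and Y: "Y \<in> carrier_mat n n" and Z: "Z \<in> carrier_mat n n"
  have "tr (X * Y * Z) = tr (X * (Y * Z))" using X Y Z by (simp add: assoc_mult_mat[of _ n n _ n _ n])
  also have "\<dots> = tr (Y * Z * X)" by (rule tr_comm[of _ n n]) (use X Y Z in simp_all)
  finally show ?thesis .
qed

lemma tr_Dm: assumes r: "\<rho> \<in> carrier_mat n n" shows "tr (Dm \<rho>) = tr \<rho>"
proof -
  have "tr (Dm \<rho>) = tr (1\<^sub>m n * Dm \<rho> * 1\<^sub>m n)" using r by simp
  also have "\<dots> = (\<Sum>k<m. tr (1\<^sub>m n * (A k * \<rho> * mat_adjoint (A k)) * 1\<^sub>m n))"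
    unfolding Dm_def using r by (intro tr_msum) simp_all
  also have "\<dots> = (\<Sum>k<m. tr (\<rho> * (mat_adjoint (A k) * A k) * 1\<^sub>m n))"
  proof (rule sum.cong[OF refl])
    fix k assume "k \<in> {..<m}" hence k: "A k \<in> carrier_mat n n" by simp
    have "tr (1\<^sub>m n * (A k * \<rho> * mat_adjoint (A k)) * 1\<^sub>m n) = tr (A k * \<rho> * mat_adjoint (A k))"
      using k r by simp
    also have "\<dots> = tr (\<rho> * mat_adjoint (A k) * A k)" by (rule tr_cyc3) (use k r in simp_all)
    also have "\<dots> = tr (\<rho> * (mat_adjoint (A k) * A k) * 1\<^sub>m n)"
      using k r by (simp add: assoc_mult_mat[of \<rho> n n "mat_adjoint (A k)" n "A k" n])
    finally show "tr (1\<^sub>m n * (A k * \<rho> * mat_adjoint (A k)) * 1\<^sub>m n) = tr (\<rho> * (mat_adjoint (A k) * A k) * 1\<^sub>m n)" .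
  qed
  also have "\<dots> = tr (\<rho> * msum n (\<lambda>j. mat_adjoint (A j) * A j) m * 1\<^sub>m n)"
    using r by (intro tr_msum[symmetric]) simp_all
  also have "\<dots> = tr \<rho>" using r by (simp add: tp)
  finally show ?thesis .
qed

lemma tr_Cm: assumes r: "\<rho> \<in> carrier_mat n n" shows "tr (Cm \<rho>) = tr \<rho>"
proof -
  have "tr (Cm \<rho>) = tr (\<rho> * mat_adjoint U * U)" unfolding Cm_def using r by (rule tr_cyc3[OF Uc]) simp
  also have "\<dots> = tr \<rho>" using r by (simp add: assoc_mult_mat[of \<rho> n n "mat_adjoint U" n U n] UU)
  finally show ?thesis .
qed

lemma adj_Dm: assumes r: "\<rho> \<in> carrier_mat n n" shows "mat_adjoint (Dm \<rho>) = Dm (mat_adjoint \<rho>)"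
proof -
  have "mat_adjoint (Dm \<rho>) = msum n (\<lambda>j. mat_adjoint (A j * \<rho> * mat_adjoint (A j))) m"
    unfolding Dm_def using r by (intro adj_msum) simp
  also have "\<dots> = Dm (mat_adjoint \<rho>)" unfolding Dm_def
  proof (rule msum_cong)
    fix k assume "k < m" hence k: "A k \<in> carrier_mat n n" by simp
    have "mat_adjoint (A k * \<rho> * mat_adjoint (A k)) = mat_adjoint (mat_adjoint (A k)) * mat_adjoint (A k * \<rho>)"
      using k r by (intro adj_mult[of _ n n _ n]) simp_all
    also have "\<dots> = A k * (mat_adjoint \<rho> * mat_adjoint (A k))"
      using k r by (simp add: adj_mult[of _ n n _ n])
    also have "\<dots> = A k * mat_adjoint \<rho> * mat_adjoint (A k)"
      using k r by (simp add: assoc_mult_mat[of _ n n _ n _ n])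
    finally show "mat_adjoint (A k * \<rho> * mat_adjoint (A k)) = A k * mat_adjoint \<rho> * mat_adjoint (A k)" .
  qed
  finally show ?thesis .
qed

lemma hs_Cm: assumes r: "\<rho> \<in> carrier_mat n n" shows "hs (Cm \<rho>) (Cm \<rho>) = hs \<rho> \<rho>"
proof -
  have a: "mat_adjoint (Cm \<rho>) = U * mat_adjoint \<rho> * mat_adjoint U"
    unfolding Cm_def using r by (simp add: adj_mult[of _ n n _ n] assoc_mult_mat[of _ n n _ n _ n])
  have "mat_adjoint (Cm \<rho>) * Cm \<rho> = U * mat_adjoint \<rho> * (mat_adjoint U * U) * \<rho> * mat_adjoint U"
    unfolding a unfolding Cm_def using r by (simp add: assoc_mult_mat[of _ n n _ n _ n])
  also have "\<dots> = U * (mat_adjoint \<rho> * \<rho>) * mat_adjoint U"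
    using r by (simp add: UU assoc_mult_mat[of _ n n _ n _ n])
  finally have "hs (Cm \<rho>) (Cm \<rho>) = tr (U * (mat_adjoint \<rho> * \<rho>) * mat_adjoint U)" unfolding hs_def by simp
  also have "\<dots> = tr (mat_adjoint \<rho> * \<rho> * mat_adjoint U * U)" using r by (intro tr_cyc3) simp_all
  also have "\<dots> = hs \<rho> \<rho>" unfolding hs_def using r by (simp add: UU assoc_mult_mat[of _ n n _ n _ n])
  finally show ?thesis .
qed

end



context chan begin

lemma hs_Dm_le: assumes r: "\<rho> \<in> carrier_mat n n"
  shows "Re (hs (Dm \<rho>) (Dm \<rho>)) \<le> Re (hs \<rho> \<rho>)"
proof -
  define Y where "Y = Dm \<rho>"
  have Y: "Y \<in> carrier_mat n n" unfolding Y_def using r by simp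
  define P where "P k = \<rho> * mat_adjoint (A k)" for k
  define Q where "Q k = mat_adjoint (A k) * Y" for k
  have P: "k < m \<Longrightarrow> P k \<in> carrier_mat n n" for k unfolding P_def using r by simp
  have Q: "k < m \<Longrightarrow> Q k \<in> carrier_mat n n" for k unfolding Q_def using Y by simp
  have S1: "(\<Sum>k<m. hs (P k) (P k)) = hs \<rho> \<rho>"
  proof -
    have "(\<Sum>k<m. hs (P k) (P k)) = (\<Sum>k<m. tr (\<rho> * (mat_adjoint (A k) * A k) * mat_adjoint \<rho>))"
    proof (rule sum.cong[OF refl])
      fix k assume "k \<in> {..<m}" hence k: "A k \<in> carrier_mat n n" by simp
      have "hs (P k) (P k) = tr (A k * mat_adjoint \<rho> * (\<rho> * mat_adjoint (A k)))"
        unfolding hs_def P_def using k r by (simp add: adj_mult[of _ n n _ n])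
      also have "\<dots> = tr (\<rho> * mat_adjoint (A k) * (A k * mat_adjoint \<rho>))"
        by (rule tr_comm[of _ n n]) (use k r in simp_all)
      also have "\<dots> = tr (\<rho> * (mat_adjoint (A k) * A k) * mat_adjoint \<rho>)"
        using k r by (simp add: assoc_mult_mat[of _ n n _ n _ n])
      finally show "hs (P k) (P k) = tr (\<rho> * (mat_adjoint (A k) * A k) * mat_adjoint \<rho>)" .
    qed
    also have "\<dots> = tr (\<rho> * msum n (\<lambda>j. mat_adjoint (A j) * A j) m * mat_adjoint \<rho>)"
      by (rule tr_msum[symmetric]) (use r in simp_all)
    also have "\<dots> = tr (mat_adjoint \<rho> * \<rho>)" unfolding tp using r
      by (simp, intro tr_comm[of _ n n]) simp_all
    finally show ?thesis unfolding hs_def .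
  qed
  have S2: "(\<Sum>k<m. hs (Q k) (Q k)) = hs Y Y"
  proof -
    have "(\<Sum>k<m. hs (Q k) (Q k)) = (\<Sum>k<m. tr (mat_adjoint Y * (A k * mat_adjoint (A k)) * Y))"
    proof (rule sum.cong[OF refl])
      fix k assume "k \<in> {..<m}" hence k: "A k \<in> carrier_mat n n" by simp
      have "hs (Q k) (Q k) = tr (mat_adjoint Y * A k * (mat_adjoint (A k) * Y))"
        unfolding hs_def Q_def using k Y by (simp add: adj_mult[of _ n n _ n])
      also have "\<dots> = tr (mat_adjoint Y * (A k * mat_adjoint (A k)) * Y)"
        using k Y by (simp add: assoc_mult_mat[of _ n n _ n _ n])
      finally show "hs (Q k) (Q k) = tr (mat_adjoint Y * (A k * mat_adjoint (A k)) * Y)" .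
    qed
    also have "\<dots> = tr (mat_adjoint Y * msum n (\<lambda>j. A j * mat_adjoint (A j)) m * Y)"
      by (rule tr_msum[symmetric]) (use Y in simp_all)
    also have "\<dots> = hs Y Y" unfolding un hs_def using Y by simp
    finally show ?thesis .
  qed
  have S3: "(\<Sum>k<m. hs (P k) (Q k)) = hs Y Y"
  proof -
    have "(\<Sum>k<m. hs (P k) (Q k)) = (\<Sum>k<m. tr (1\<^sub>m n * (A k * mat_adjoint \<rho> * mat_adjoint (A k)) * Y))"
    proof (rule sum.cong[OF refl])
      fix k assume "k \<in> {..<m}" hence k: "A k \<in> carrier_mat n n" by simp
      have "hs (P k) (Q k) = tr (A k * mat_adjoint \<rho> * (mat_adjoint (A k) * Y))"
        unfolding hs_def P_def Q_def using k r by (simp add: adj_mult[of _ n n _ n])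
      also have "\<dots> = tr (1\<^sub>m n * (A k * mat_adjoint \<rho> * mat_adjoint (A k)) * Y)"
        using k r Y by (simp add: assoc_mult_mat[of _ n n _ n _ n])
      finally show "hs (P k) (Q k) = tr (1\<^sub>m n * (A k * mat_adjoint \<rho> * mat_adjoint (A k)) * Y)" .
    qed
    also have "\<dots> = tr (1\<^sub>m n * Dm (mat_adjoint \<rho>) * Y)"
      unfolding Dm_def by (rule tr_msum[symmetric]) (use r Y in simp_all)
    also have "\<dots> = hs Y Y" unfolding hs_def Y_def using r by (simp add: adj_Dm)
    finally show ?thesis .
  qed
  have Z: "Re (hs (P k - Q k) (P k - Q k)) = Re (hs (P k) (P k)) + Re (hs (Q k) (Q k)) - 2 * Re (hs (P k) (Q k))"
    if k: "k < m" for k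
  proof -
    have PQ: "P k - Q k \<in> carrier_mat n n" using P[OF k] Q[OF k] by (simp add: minus_carrier_mat)
    have "hs (P k - Q k) (P k - Q k) = hs (P k) (P k) - hs (P k) (Q k) - (hs (Q k) (P k) - hs (Q k) (Q k))"
      using P[OF k] Q[OF k] PQ by (simp add: hs_minus_left[of _ n] hs_minus_right[of _ n])
    moreover have "hs (Q k) (P k) = cnj (hs (P k) (Q k))" using P[OF k] Q[OF k] by (rule hs_sym)
    ultimately show ?thesis by simp
  qed
  have "0 \<le> (\<Sum>k<m. Re (hs (P k - Q k) (P k - Q k)))"
    by (rule sum_nonneg, rule hs_self_nonneg[of _ n]) (use P Q in \<open>simp add: minus_carrier_mat\<close>)
  also have "\<dots> = (\<Sum>k<m. Re (hs (P k) (P k))) + (\<Sum>k<m. Re (hs (Q k) (Q k))) - 2 * (\<Sum>k<m. Re (hs (P k) (Q k)))"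
    by (simp add: Z sum.distrib sum_subtractf sum_distrib_left)
  also have "\<dots> = Re (hs \<rho> \<rho>) - Re (hs Y Y)"
    by (simp only: Re_sum[symmetric] S1 S2 S3)
  finally show ?thesis unfolding Y_def by simp
qed

end



lemma sum_min2: "sum_list (map (min (2::nat)) xs) \<le> 1 \<Longrightarrow> sum_list xs \<le> 1"
proof -
  assume a: "sum_list (map (min (2::nat)) xs) \<le> 1"
  have "sum_list (map (min (2::nat)) xs) \<le> 1 \<Longrightarrow> sum_list xs = sum_list (map (min (2::nat)) xs)"
  proof (induct xs)
  case (Cons x xs)
  show ?case
  proof (cases "x \<le> 1")
    case True
    hence "min 2 x = x" by simp
    with Cons show ?thesis by simp
  next
    case False
    hence "min 2 x = 2" by simp
    with Cons(2) show ?thesis by simp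
  qed
  qed simp
  with a show ?thesis by simp
qed

lemma sum_min1: "sum_list (map (min (1::nat)) xs) \<le> sum_list xs"
  by (induct xs) simp_all

lemma jnf_exists_complex: "(M::complex mat) \<in> carrier_mat N N \<Longrightarrow> \<exists>n_as. jordan_nf M n_as"
proof -
  assume M: "M \<in> carrier_mat N N"
  from char_poly_factorized[OF M] obtain as where "char_poly M = (\<Prod>a\<leftarrow>as. [:- a, 1:])" by blast
  from jordan_nf_exists[OF M this] show ?thesis .
qed

lemma dim_gen_order:
  assumes J: "jordan_nf (M::complex mat) n_as"
  shows "dim_gen_eigenspace M e k = sum_list (map (min k) (map fst (filter (\<lambda>na. snd na = e) n_as)))"
    and "order e (char_poly M) = sum_list (map fst (filter (\<lambda>na. snd na = e) n_as))"
proof -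
  have f: "[(n, e')\<leftarrow>n_as . e' = e] = filter (\<lambda>na. snd na = e) n_as"
    by (induct n_as) auto
  show "dim_gen_eigenspace M e k = sum_list (map (min k) (map fst (filter (\<lambda>na. snd na = e) n_as)))"
    unfolding dim_gen_eigenspace[OF J] f[symmetric]
    by (induct n_as) (auto simp: min.commute)
  show "order e (char_poly M) = sum_list (map fst (filter (\<lambda>na. snd na = e) n_as))"
    by (rule jordan_nf_order[OF J])
qed

lemma order1_kernel_dim:
  assumes M: "(M::complex mat) \<in> carrier_mat N N" and o: "order e (char_poly M) = 1"
  shows "kernel_dim (char_matrix M e ^\<^sub>m 1) \<le> 1"
proof -
  from jnf_exists_complex[OF M] obtain n_as where J: "jordan_nf M n_as" by blast
  have "kernel_dim (char_matrix M e ^\<^sub>m 1) = dim_gen_eigenspace M e 1" unfolding dim_gen_eigenspace_def ..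
  also have "\<dots> \<le> order e (char_poly M)" unfolding dim_gen_order[OF J] by (rule sum_min1)
  finally show ?thesis using o by simp
qed

lemma kernel_dim2_order:
  assumes M: "(M::complex mat) \<in> carrier_mat N N" and k: "kernel_dim (char_matrix M e ^\<^sub>m 2) \<le> 1"
  shows "order e (char_poly M) \<le> 1"
proof -
  from jnf_exists_complex[OF M] obtain n_as where J: "jordan_nf M n_as" by blast
  have "dim_gen_eigenspace M e 2 \<le> 1" using k unfolding dim_gen_eigenspace_def .
  thus ?thesis unfolding dim_gen_order[OF J] by (rule sum_min2)
qed




context kernel
begin

lemma lincomb_single: assumes w: "w \<in> mat_kernel A"
  shows "lincomb a {w} = a w \<cdot>\<^sub>v w"
proof -
  have wc: "w \<in> carrier_vec nc" by (rule mat_kernelD(1)[OF A w])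
  have "lincomb a {w} = finsum VK (\<lambda>v. a v \<cdot>\<^sub>v v) {w}" unfolding Ker.lincomb_def by simp
  also have "\<dots> = a w \<cdot>\<^sub>v w + finsum VK (\<lambda>v. a v \<cdot>\<^sub>v v) {}"
    by (rule Ker.finsum_insert) (use w mat_kernel_smult[OF A w] in auto)
  also have "\<dots> = a w \<cdot>\<^sub>v w" using wc by simp
  finally show ?thesis .
qed

lemma span_single: assumes w: "w \<in> mat_kernel A" and v: "v \<in> span {w}"
  shows "\<exists>c. v = c \<cdot>\<^sub>v w"
proof -
  from Ker.finite_in_span[of "{w}" v] w v obtain a where "lincomb a {w} = v" by auto
  thus ?thesis using lincomb_single[OF w] by metis
qed

lemma in_span_single: assumes w: "w \<in> mat_kernel A" shows "c \<cdot>\<^sub>v w \<in> span {w}"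
proof -
  have "lincomb (\<lambda>_. c) {w} \<in> span {w}" unfolding Ker.span_def by force
  thus ?thesis using lincomb_single[OF w] by simp
qed

lemma single_indpt: assumes w: "w \<in> mat_kernel A" and nz: "w \<noteq> 0\<^sub>v nc"
  shows "lin_indpt {w}"
proof (rule Ker.finite_lin_indpt2)
  fix a assume "lincomb a {w} = 0\<^sub>v nc"
  hence e: "a w \<cdot>\<^sub>v w = 0\<^sub>v nc" using lincomb_single[OF w] by simp
  have wc: "w \<in> carrier_vec nc" by (rule mat_kernelD(1)[OF A w])
  show "\<forall>v\<in>{w}. a v = 0"
  proof (rule ccontr)
    assume "\<not> (\<forall>v\<in>{w}. a v = 0)" hence aw: "a w \<noteq> 0" by simp
    have "w = inverse (a w) \<cdot>\<^sub>v (a w \<cdot>\<^sub>v w)" using aw wc by (simp add: smult_smult_assoc)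
    also have "\<dots> = 0\<^sub>v nc" unfolding e by simp
    finally show False using nz by simp
  qed
qed (use w in simp_all)

lemma fin_dim_Ker: "Ker.fin_dim"
proof -
  from kernel_basis_exists[OF A] obtain B where "finite B" "basis B" by blast
  thus ?thesis unfolding Ker.fin_dim_def Ker.basis_def by blast
qed

end

lemma kernel_dim_le1_prop:
  assumes K: "(K::complex mat) \<in> carrier_mat N N" and d: "kernel_dim K \<le> 1"
    and w: "w \<in> mat_kernel K" and nz: "w \<noteq> 0\<^sub>v N" and v: "v \<in> mat_kernel K"
  shows "\<exists>c. v = c \<cdot>\<^sub>v w"
proof -
  interpret kernel N N K by (unfold_locales, rule K)
  show ?thesis
  proof (cases "v \<in> span {w}")
    case True thus ?thesis by (rule span_single[OF w])
  next
    case False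
    have vw: "v \<noteq> w" using False in_span_single[OF w, of 1] by auto
    have "lin_indpt ({w} \<union> {v})"
      using Ker.lin_dep_iff_in_span[of "{w}" v] False single_indpt[OF w nz] w v vw by auto
    from Ker.li_le_dim(2)[OF fin_dim_Ker _ this] w v have "card ({w} \<union> {v}) \<le> Ker.dim" by auto
    hence "2 \<le> kernel_dim K" using vw by simp
    with d show ?thesis by simp
  qed
qed

lemma prop_kernel_dim_le1:
  assumes K: "(K::complex mat) \<in> carrier_mat N N"
    and w: "w \<in> mat_kernel K" and all: "\<And>v. v \<in> mat_kernel K \<Longrightarrow> \<exists>c. v = c \<cdot>\<^sub>v w"
  shows "kernel_dim K \<le> 1"
proof -
  interpret kernel N N K by (unfold_locales, rule K)
  have "span {w} = mat_kernel K"
  proof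
    show "span {w} \<subseteq> mat_kernel K" using Ker.span_is_subset2[of "{w}"] w by simp
    show "mat_kernel K \<subseteq> span {w}"
    proof
      fix v assume "v \<in> mat_kernel K"
      from all[OF this] obtain c where "v = c \<cdot>\<^sub>v w" by blast
      thus "v \<in> span {w}" using in_span_single[OF w] by simp
    qed
  qed
  hence "card {w} \<ge> Ker.dim" using w by (intro Ker.gen_ge_dim) auto
  thus ?thesis by simp
qed




definition vecm :: "nat \<Rightarrow> complex mat \<Rightarrow> complex vec" where
  "vecm n \<rho> = vec (n*n) (\<lambda>r. \<rho> $$ (r div n, r mod n))"
definition matv :: "nat \<Rightarrow> complex vec \<Rightarrow> complex mat" where
  "matv n v = mat n n (\<lambda>(i,j). v $ (i*n+j))"

lemma vecm_carrier[simp]: "vecm n \<rho> \<in> carrier_vec (n*n)" unfolding vecm_def by simp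
lemma vecm_dim[simp]: "dim_vec (vecm n \<rho>) = n*n" unfolding vecm_def by simp
lemma matv_carrier[simp]: "matv n v \<in> carrier_mat n n" unfolding matv_def by simp

lemma idx_bounds: "r < n*n \<Longrightarrow> r div n < n \<and> r mod n < (n::nat)"
proof -
  assume r: "r < n*n"
  hence n: "n > 0" by (cases n) auto
  have "r div n < n" using r by (simp add: div_less_iff_less_mult n)
  moreover have "r mod n < n" using n by simp
  ultimately show ?thesis by simp
qed

lemma idx_comb: "i < n \<Longrightarrow> j < (n::nat) \<Longrightarrow> (i*n+j) div n = i \<and> (i*n+j) mod n = j \<and> i*n+j < n*n"
proof -
  assume i: "i < n" and j: "j < n"
  have "(i*n+j) div n = i" using j by simp
  moreover have "(i*n+j) mod n = j" using j by simp
  moreover have "i*n+j < n*n"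
  proof -
    have "i*n + j < i*n + n" using j by simp
    also have "\<dots> = (i+1)*n" by simp
    also have "\<dots> \<le> n*n" using i by (simp add: mult_le_mono1 del: mult_Suc)
    finally show ?thesis .
  qed
  ultimately show ?thesis by simp
qed

lemma vecm_index[simp]: "r < n*n \<Longrightarrow> vecm n \<rho> $ r = \<rho> $$ (r div n, r mod n)"
  unfolding vecm_def by simp

lemma vecm_matv: "v \<in> carrier_vec (n*n) \<Longrightarrow> vecm n (matv n v) = v"
proof (rule eq_vecI)
  fix r assume v: "v \<in> carrier_vec (n*n)" and r: "r < dim_vec v"
  hence r': "r < n*n" by simp
  from idx_bounds[OF r'] have b: "r div n < n" "r mod n < n" by auto
  have "vecm n (matv n v) $ r = v $ ((r div n)*n + r mod n)" using r' b unfolding matv_def by simp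
  also have "(r div n)*n + r mod n = r" by simp
  finally show "vecm n (matv n v) $ r = v $ r" .
qed simp

lemma vecm_inj: assumes X: "X \<in> carrier_mat n n" and Y: "Y \<in> carrier_mat n n" and e: "vecm n X = vecm n Y"
  shows "X = Y"
proof (rule eq_matI)
  fix i j assume i: "i < dim_row Y" and j: "j < dim_col Y"
  hence i': "i < n" and j': "j < n" using Y by auto
  from idx_comb[OF i' j'] have c: "(i*n+j) div n = i" "(i*n+j) mod n = j" "i*n+j < n*n" by auto
  have "vecm n X $ (i*n+j) = vecm n Y $ (i*n+j)" using e by simp
  thus "X $$ (i,j) = Y $$ (i,j)" using c by simp
qed (use X Y in auto)

lemma vecm_add: "X \<in> carrier_mat n n \<Longrightarrow> Y \<in> carrier_mat n n \<Longrightarrow> vecm n (X + Y) = vecm n X + vecm n Y"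
  by (rule eq_vecI) (simp_all add: idx_bounds)

lemma vecm_minus: "X \<in> carrier_mat n n \<Longrightarrow> Y \<in> carrier_mat n n \<Longrightarrow> vecm n (X - Y) = vecm n X - vecm n Y"
  by (rule eq_vecI) (simp_all add: idx_bounds)

lemma vecm_smult: "X \<in> carrier_mat n n \<Longrightarrow> vecm n (c \<cdot>\<^sub>m X) = c \<cdot>\<^sub>v vecm n X"
  by (rule eq_vecI) (simp_all add: idx_bounds)

lemma vecm_zero: "vecm n (0\<^sub>m n n) = 0\<^sub>v (n*n)"
  by (rule eq_vecI) (simp_all add: idx_bounds)

definition lin :: "nat \<Rightarrow> (complex mat \<Rightarrow> complex mat) \<Rightarrow> bool" where
  "lin n T \<longleftrightarrow> (\<forall>X\<in>carrier_mat n n. T X \<in> carrier_mat n n) \<and>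
     (\<forall>X\<in>carrier_mat n n. \<forall>Y\<in>carrier_mat n n. T (X + Y) = T X + T Y) \<and>
     (\<forall>X\<in>carrier_mat n n. \<forall>c. T (c \<cdot>\<^sub>m X) = c \<cdot>\<^sub>m T X)"

lemma linD: assumes "lin n T"
  shows "X \<in> carrier_mat n n \<Longrightarrow> T X \<in> carrier_mat n n"
    "X \<in> carrier_mat n n \<Longrightarrow> Y \<in> carrier_mat n n \<Longrightarrow> T (X + Y) = T X + T Y"
    "X \<in> carrier_mat n n \<Longrightarrow> T (c \<cdot>\<^sub>m X) = c \<cdot>\<^sub>m T X"
  using assms unfolding lin_def by blast+

lemma lin_zero: assumes T: "lin n T" shows "T (0\<^sub>m n n) = 0\<^sub>m n n"
proof -
  have z: "0\<^sub>m n n = (0::complex) \<cdot>\<^sub>m 0\<^sub>m n n" by simp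
  have "T (0\<^sub>m n n) = 0 \<cdot>\<^sub>m T (0\<^sub>m n n)" by (subst z, rule linD(3)[OF T], simp)
  also have "\<dots> = 0\<^sub>m n n" using linD(1)[OF T, of "0\<^sub>m n n"]
    by (intro eq_matI) (simp_all add: carrier_matD)
  finally show ?thesis .
qed

lemma lin_msum: assumes T: "lin n T" and f: "\<And>k. k < K \<Longrightarrow> f k \<in> carrier_mat n n"
  shows "T (msum n f K) = msum n (\<lambda>k. T (f k)) K"
  using f
proof (induct K)
  case 0 then show ?case using lin_zero[OF T] by simp
next
  case (Suc K)
  have M: "msum n f K \<in> carrier_mat n n" by (rule msum_carrier, rule Suc(2), simp)
  have F: "f K \<in> carrier_mat n n" by (rule Suc(2), simp)
  have "T (msum n f (Suc K)) = T (msum n f K) + T (f K)" using linD(2)[OF T M F] by simp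
  moreover have "T (msum n f K) = msum n (\<lambda>k. T (f k)) K" by (rule Suc(1), rule Suc(2), simp)
  ultimately show ?case by simp
qed

lemma mat_unit_carrier[simp]: "mat_unit n k l \<in> carrier_mat n n" unfolding mat_unit_def by simp

lemma mat_decomp: assumes X: "X \<in> carrier_mat n n"
  shows "X = msum n (\<lambda>c. X $$ (c div n, c mod n) \<cdot>\<^sub>m mat_unit n (c div n) (c mod n)) (n*n)"
proof (rule eq_matI)
  let ?f = "\<lambda>c. X $$ (c div n, c mod n) \<cdot>\<^sub>m mat_unit n (c div n) (c mod n)"
  have f: "\<And>c. c < n*n \<Longrightarrow> ?f c \<in> carrier_mat n n" by simp
  fix i j assume i: "i < dim_row (msum n ?f (n*n))" and j: "j < dim_col (msum n ?f (n*n))"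
  have M: "msum n ?f (n*n) \<in> carrier_mat n n" using f by (rule msum_carrier)
  hence i': "i < n" and j': "j < n" using i j carrier_matD[OF M] by simp_all
  from idx_comb[OF i' j'] have c: "(i*n+j) div n = i" "(i*n+j) mod n = j" "i*n+j < n*n" by auto
  have "msum n ?f (n*n) $$ (i,j) = (\<Sum>c<n*n. ?f c $$ (i,j))" by (rule msum_index[OF f i' j'])
  also have "\<dots> = (\<Sum>c<n*n. if c = i*n+j then X $$ (i,j) else 0)"
  proof (rule sum.cong[OF refl])
    fix c assume "c \<in> {..<n*n}" hence cn: "c < n*n" by simp
    from idx_bounds[OF cn] have b: "c div n < n" "c mod n < n" by auto
    have iff: "(i = c div n \<and> j = c mod n) = (c = i*n+j)"
    proof
      assume "i = c div n \<and> j = c mod n" thus "c = i*n+j" by simp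
    next
      assume "c = i*n+j" thus "i = c div n \<and> j = c mod n" using c by simp
    qed
    show "?f c $$ (i,j) = (if c = i*n+j then X $$ (i,j) else 0)"
      using i' j' b iff c unfolding mat_unit_def by auto
  qed
  also have "\<dots> = X $$ (i,j)" using c by simp
  finally show "X $$ (i,j) = msum n ?f (n*n) $$ (i,j)" by simp
qed (use X carrier_matD[OF msum_carrier[of "n*n" "\<lambda>c. X $$ (c div n, c mod n) \<cdot>\<^sub>m mat_unit n (c div n) (c mod n)" n]] in simp_all)

lemma so_matrix_carrier[simp]: "so_matrix n T \<in> carrier_mat (n*n) (n*n)"
  "dim_row (so_matrix n T) = n*n" "dim_col (so_matrix n T) = n*n" unfolding so_matrix_def by simp_all

lemma bridge: assumes T: "lin n T" and X: "X \<in> carrier_mat n n"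
  shows "vecm n (T X) = so_matrix n T *\<^sub>v vecm n X"
proof (rule eq_vecI)
  let ?f = "\<lambda>c. X $$ (c div n, c mod n) \<cdot>\<^sub>m mat_unit n (c div n) (c mod n)"
  have f: "\<And>c. c < n*n \<Longrightarrow> ?f c \<in> carrier_mat n n" by simp
  have g: "\<And>c. c < n*n \<Longrightarrow> X $$ (c div n, c mod n) \<cdot>\<^sub>m T (mat_unit n (c div n) (c mod n)) \<in> carrier_mat n n"
    using linD(1)[OF T] by simp
  have TX: "T X = msum n (\<lambda>c. X $$ (c div n, c mod n) \<cdot>\<^sub>m T (mat_unit n (c div n) (c mod n))) (n*n)"
  proof -
    have "T X = T (msum n ?f (n*n))" using mat_decomp[OF X] by simp
    also have "\<dots> = msum n (\<lambda>c. T (?f c)) (n*n)" by (rule lin_msum[OF T f])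
    also have "\<dots> = msum n (\<lambda>c. X $$ (c div n, c mod n) \<cdot>\<^sub>m T (mat_unit n (c div n) (c mod n))) (n*n)"
      by (rule msum_cong) (simp add: linD(3)[OF T])
    finally show ?thesis .
  qed
  fix r assume r: "r < dim_vec (so_matrix n T *\<^sub>v vecm n X)"
  hence r': "r < n*n" by simp
  from idx_bounds[OF r'] have b: "r div n < n" "r mod n < n" by auto
  have "vecm n (T X) $ r = T X $$ (r div n, r mod n)" using r' by simp
  also have "\<dots> = (\<Sum>c<n*n. (X $$ (c div n, c mod n) \<cdot>\<^sub>m T (mat_unit n (c div n) (c mod n))) $$ (r div n, r mod n))"
    unfolding TX by (rule msum_index[OF g b])
  also have "\<dots> = (\<Sum>c<n*n. so_matrix n T $$ (r, c) * vecm n X $ c)"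
  proof (rule sum.cong[OF refl])
    fix c assume "c \<in> {..<n*n}" hence cn: "c < n*n" by simp
    from idx_bounds[OF cn] have bc: "c div n < n" "c mod n < n" by auto
    have C: "T (mat_unit n (c div n) (c mod n)) \<in> carrier_mat n n" using linD(1)[OF T] by simp
    show "(X $$ (c div n, c mod n) \<cdot>\<^sub>m T (mat_unit n (c div n) (c mod n))) $$ (r div n, r mod n) = so_matrix n T $$ (r, c) * vecm n X $ c"
      using C b cn r' unfolding so_matrix_def by (simp add: carrier_matD mult.commute)
  qed
  also have "\<dots> = (so_matrix n T *\<^sub>v vecm n X) $ r"
    using r' by (simp add: scalar_prod_def atLeast0LessThan)
  finally show "vecm n (T X) $ r = (so_matrix n T *\<^sub>v vecm n X) $ r" .
qed simp




lemma cm_mult: assumes M: "(M::complex mat) \<in> carrier_mat N N" and v: "v \<in> carrier_vec N"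
  shows "char_matrix M e *\<^sub>v v = M *\<^sub>v v - e \<cdot>\<^sub>v v"
proof (rule eq_vecI)
  fix i assume "i < dim_vec (M *\<^sub>v v - e \<cdot>\<^sub>v v)"
  hence i: "i < N" using M v by (simp add: carrier_vecD)
  have "(char_matrix M e *\<^sub>v v) $ i = (\<Sum>j<N. (M $$ (i, j) - e * (if j = i then 1 else 0)) * v $ j)"
    using M v i unfolding char_matrix_def by (simp add: carrier_matD scalar_prod_def atLeast0LessThan)
  also have "\<dots> = (\<Sum>j<N. M $$ (i,j) * v $ j - (if j = i then e * v $ j else 0))"
    by (rule sum.cong) (simp_all add: left_diff_distrib)
  also have "\<dots> = (\<Sum>j<N. M $$ (i,j) * v $ j) - (\<Sum>j<N. (if j = i then e * v $ j else 0))"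
    by (rule sum_subtractf)
  also have "(\<Sum>j<N. (if j = i then e * v $ j else 0)) = e * v $ i" using i by simp
  also have "(\<Sum>j<N. M $$ (i,j) * v $ j) - e * v $ i = (M *\<^sub>v v - e \<cdot>\<^sub>v v) $ i"
    using M v i by (simp add: carrier_matD carrier_vecD scalar_prod_def atLeast0LessThan)
  finally show "(char_matrix M e *\<^sub>v v) $ i = (M *\<^sub>v v - e \<cdot>\<^sub>v v) $ i" .
qed (use M v carrier_matD[OF M] in \<open>simp add: carrier_vecD char_matrix_def\<close>)

lemma cm_pow1: assumes M: "(M::complex mat) \<in> carrier_mat N N" and v: "v \<in> carrier_vec N"
  shows "(char_matrix M e ^\<^sub>m 1) *\<^sub>v v = M *\<^sub>v v - e \<cdot>\<^sub>v v"
proof -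
  have C: "char_matrix M e \<in> carrier_mat N N" using M carrier_matD[OF M] unfolding char_matrix_def by simp
  have "char_matrix M e ^\<^sub>m 1 = 1\<^sub>m N * char_matrix M e" using C by (simp add: carrier_matD)
  hence "(char_matrix M e ^\<^sub>m 1) *\<^sub>v v = char_matrix M e *\<^sub>v v" using C v by simp
  thus ?thesis using cm_mult[OF M v] by simp
qed

lemma cm_pow2: assumes M: "(M::complex mat) \<in> carrier_mat N N" and v: "v \<in> carrier_vec N"
  shows "(char_matrix M e ^\<^sub>m 2) *\<^sub>v v = M *\<^sub>v (M *\<^sub>v v - e \<cdot>\<^sub>v v) - e \<cdot>\<^sub>v (M *\<^sub>v v - e \<cdot>\<^sub>v v)"
proof -
  have C: "char_matrix M e \<in> carrier_mat N N" using M carrier_matD[OF M] unfolding char_matrix_def by simp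
  have "char_matrix M e ^\<^sub>m 2 = 1\<^sub>m N * char_matrix M e * char_matrix M e" using C
    by (simp add: carrier_matD numeral_2_eq_2)
  hence "(char_matrix M e ^\<^sub>m 2) *\<^sub>v v = char_matrix M e *\<^sub>v (char_matrix M e *\<^sub>v v)" using C v by simp
  also have "\<dots> = M *\<^sub>v (M *\<^sub>v v - e \<cdot>\<^sub>v v) - e \<cdot>\<^sub>v (M *\<^sub>v v - e \<cdot>\<^sub>v v)"
    using cm_mult[OF M v] cm_mult[OF M, of "M *\<^sub>v v - e \<cdot>\<^sub>v v"] M v by simp
  finally show ?thesis .
qed

lemma tr_minus: "(A::complex mat) \<in> carrier_mat a a \<Longrightarrow> B \<in> carrier_mat a a \<Longrightarrow> tr (A - B) = tr A - tr B"
  unfolding tr_def by (simp add: carrier_matD sum_subtractf)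

lemma msum_add: assumes f: "\<And>k. k<K \<Longrightarrow> f k \<in> carrier_mat n n" and g: "\<And>k. k<K \<Longrightarrow> g k \<in> carrier_mat n n"
  shows "msum n (\<lambda>k. f k + g k) K = msum n f K + msum n g K"
proof -
  have fg: "\<And>k. k<K \<Longrightarrow> f k + g k \<in> carrier_mat n n" using f g by simp
  have M1: "msum n f K \<in> carrier_mat n n" by (rule msum_carrier) (rule f)
  have M2: "msum n g K \<in> carrier_mat n n" by (rule msum_carrier) (rule g)
  have M3: "msum n (\<lambda>k. f k + g k) K \<in> carrier_mat n n" by (rule msum_carrier) (rule fg)
  show ?thesis
  proof (rule eq_matI)
    fix i j assume "i < dim_row (msum n f K + msum n g K)" "j < dim_col (msum n f K + msum n g K)"
    hence i: "i < n" and j: "j < n" using M1 M2 by (simp_all add: carrier_matD)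
    have "msum n (\<lambda>k. f k + g k) K $$ (i,j) = (\<Sum>k<K. (f k + g k) $$ (i,j))" by (rule msum_index[OF fg i j])
    also have "\<dots> = (\<Sum>k<K. f k $$ (i,j) + g k $$ (i,j))"
    proof (rule sum.cong[OF refl])
      fix k assume "k \<in> {..<K}" hence "f k \<in> carrier_mat n n" "g k \<in> carrier_mat n n" using f g by simp_all
      thus "(f k + g k) $$ (i,j) = f k $$ (i,j) + g k $$ (i,j)" using i j carrier_matD[of "g k" n n] by simp
    qed
    also have "\<dots> = msum n f K $$ (i,j) + msum n g K $$ (i,j)"
      by (simp add: sum.distrib msum_index[OF f i j] msum_index[OF g i j])
    also have "\<dots> = (msum n f K + msum n g K) $$ (i,j)" using M1 M2 i j by (simp add: carrier_matD)
    finally show "msum n (\<lambda>k. f k + g k) K $$ (i,j) = (msum n f K + msum n g K) $$ (i,j)" .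
  qed (use M1 M2 M3 in \<open>simp_all add: carrier_matD\<close>)
qed

lemma msum_smult: assumes f: "\<And>k. k<K \<Longrightarrow> f k \<in> carrier_mat n n"
  shows "msum n (\<lambda>k. c \<cdot>\<^sub>m f k) K = c \<cdot>\<^sub>m msum n f K"
proof -
  have cf: "\<And>k. k<K \<Longrightarrow> c \<cdot>\<^sub>m f k \<in> carrier_mat n n" using f by simp
  have M1: "msum n f K \<in> carrier_mat n n" by (rule msum_carrier) (rule f)
  have M2: "msum n (\<lambda>k. c \<cdot>\<^sub>m f k) K \<in> carrier_mat n n" by (rule msum_carrier) (rule cf)
  show ?thesis
  proof (rule eq_matI)
    fix i j assume "i < dim_row (c \<cdot>\<^sub>m msum n f K)" "j < dim_col (c \<cdot>\<^sub>m msum n f K)"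
    hence i: "i < n" and j: "j < n" using M1 by (simp_all add: carrier_matD)
    have "msum n (\<lambda>k. c \<cdot>\<^sub>m f k) K $$ (i,j) = (\<Sum>k<K. (c \<cdot>\<^sub>m f k) $$ (i,j))" by (rule msum_index[OF cf i j])
    also have "\<dots> = (\<Sum>k<K. c * f k $$ (i,j))"
    proof (rule sum.cong[OF refl])
      fix k assume "k \<in> {..<K}" hence "f k \<in> carrier_mat n n" using f by simp_all
      thus "(c \<cdot>\<^sub>m f k) $$ (i,j) = c * f k $$ (i,j)" using i j carrier_matD[of "f k" n n] by simp
    qed
    also have "\<dots> = c * msum n f K $$ (i,j)"
      by (simp add: sum_distrib_left msum_index[OF f i j])
    also have "\<dots> = (c \<cdot>\<^sub>m msum n f K) $$ (i,j)" using M1 i j by (simp add: carrier_matD)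
    finally show "msum n (\<lambda>k. c \<cdot>\<^sub>m f k) K $$ (i,j) = (c \<cdot>\<^sub>m msum n f K) $$ (i,j)" .
  qed (use M1 M2 in \<open>simp_all add: carrier_matD\<close>)
qed

lemma lin_comb: assumes T1: "lin n T1" and T2: "lin n T2"
  shows "lin n (\<lambda>\<rho>. a \<cdot>\<^sub>m T1 \<rho> + b \<cdot>\<^sub>m T2 \<rho>)"
  unfolding lin_def
proof (intro conjI ballI allI)
  fix X :: "complex mat" assume X: "X \<in> carrier_mat n n"
  show "a \<cdot>\<^sub>m T1 X + b \<cdot>\<^sub>m T2 X \<in> carrier_mat n n" using linD(1)[OF T1 X] linD(1)[OF T2 X] by simp
  fix c :: complex
  show "a \<cdot>\<^sub>m T1 (c \<cdot>\<^sub>m X) + b \<cdot>\<^sub>m T2 (c \<cdot>\<^sub>m X) = c \<cdot>\<^sub>m (a \<cdot>\<^sub>m T1 X + b \<cdot>\<^sub>m T2 X)"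
    unfolding linD(3)[OF T1 X] linD(3)[OF T2 X]
    by (rule eq_matI) (use linD(1)[OF T1 X] linD(1)[OF T2 X] in \<open>simp_all add: carrier_matD algebra_simps\<close>)
next
  fix X Y :: "complex mat" assume X: "X \<in> carrier_mat n n" and Y: "Y \<in> carrier_mat n n"
  show "a \<cdot>\<^sub>m T1 (X + Y) + b \<cdot>\<^sub>m T2 (X + Y) = a \<cdot>\<^sub>m T1 X + b \<cdot>\<^sub>m T2 X + (a \<cdot>\<^sub>m T1 Y + b \<cdot>\<^sub>m T2 Y)"
    unfolding linD(2)[OF T1 X Y] linD(2)[OF T2 X Y]
    by (rule eq_matI) (use linD(1)[OF T1 X] linD(1)[OF T2 X] linD(1)[OF T1 Y] linD(1)[OF T2 Y] in
      \<open>simp_all add: carrier_matD algebra_simps\<close>)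
qed

context chan begin

lemma lin_Cm: "lin n Cm"
  unfolding lin_def
proof (intro conjI ballI allI)
  fix X :: "complex mat" assume X: "X \<in> carrier_mat n n"
  show "Cm X \<in> carrier_mat n n" using X by simp
  fix c :: complex
  have "U * (c \<cdot>\<^sub>m X) = c \<cdot>\<^sub>m (U * X)" by (rule mult_smult_distrib[OF Uc X])
  hence "U * (c \<cdot>\<^sub>m X) * mat_adjoint U = c \<cdot>\<^sub>m (U * X) * mat_adjoint U" by simp
  also have "\<dots> = c \<cdot>\<^sub>m (U * X * mat_adjoint U)" by (rule mult_smult_assoc_mat[of "U * X" n n "mat_adjoint U" n]) (use X in simp_all)
  finally show "Cm (c \<cdot>\<^sub>m X) = c \<cdot>\<^sub>m Cm X" unfolding Cm_def .
next
  fix X Y :: "complex mat" assume X: "X \<in> carrier_mat n n" and Y: "Y \<in> carrier_mat n n"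
  have "U * (X + Y) = U * X + U * Y" by (rule mult_add_distrib_mat[OF Uc X Y])
  hence "U * (X + Y) * mat_adjoint U = (U * X + U * Y) * mat_adjoint U" by simp
  also have "\<dots> = U * X * mat_adjoint U + U * Y * mat_adjoint U"
    by (rule add_mult_distrib_mat[of _ n n _ _ n]) (use X Y in simp_all)
  finally show "Cm (X + Y) = Cm X + Cm Y" unfolding Cm_def .
qed

lemma lin_Dm: "lin n Dm"
  unfolding lin_def
proof (intro conjI ballI allI)
  fix X :: "complex mat" assume X: "X \<in> carrier_mat n n"
  show "Dm X \<in> carrier_mat n n" using X by simp
  fix c :: complex
  have "Dm (c \<cdot>\<^sub>m X) = msum n (\<lambda>j. c \<cdot>\<^sub>m (A j * X * mat_adjoint (A j))) m"
    unfolding Dm_def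
  proof (rule msum_cong)
    fix k assume "k < m" hence k: "A k \<in> carrier_mat n n" by simp
    have "A k * (c \<cdot>\<^sub>m X) = c \<cdot>\<^sub>m (A k * X)" by (rule mult_smult_distrib[OF k X])
    hence "A k * (c \<cdot>\<^sub>m X) * mat_adjoint (A k) = c \<cdot>\<^sub>m (A k * X) * mat_adjoint (A k)" by simp
    also have "\<dots> = c \<cdot>\<^sub>m (A k * X * mat_adjoint (A k))" by (rule mult_smult_assoc_mat[of "A k * X" n n "mat_adjoint (A k)" n]) (use X k in simp_all)
    finally show "A k * (c \<cdot>\<^sub>m X) * mat_adjoint (A k) = c \<cdot>\<^sub>m (A k * X * mat_adjoint (A k))" .
  qed
  also have "\<dots> = c \<cdot>\<^sub>m Dm X" unfolding Dm_def by (rule msum_smult) (use X in simp)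
  finally show "Dm (c \<cdot>\<^sub>m X) = c \<cdot>\<^sub>m Dm X" .
next
  fix X Y :: "complex mat" assume X: "X \<in> carrier_mat n n" and Y: "Y \<in> carrier_mat n n"
  have "Dm (X + Y) = msum n (\<lambda>j. A j * X * mat_adjoint (A j) + A j * Y * mat_adjoint (A j)) m"
    unfolding Dm_def
  proof (rule msum_cong)
    fix k assume "k < m" hence k: "A k \<in> carrier_mat n n" by simp
    have "A k * (X + Y) = A k * X + A k * Y" by (rule mult_add_distrib_mat[OF k X Y])
    hence "A k * (X + Y) * mat_adjoint (A k) = (A k * X + A k * Y) * mat_adjoint (A k)" by simp
    also have "\<dots> = A k * X * mat_adjoint (A k) + A k * Y * mat_adjoint (A k)"
      by (rule add_mult_distrib_mat[of _ n n _ _ n]) (use X Y k in simp_all)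
    finally show "A k * (X + Y) * mat_adjoint (A k) = A k * X * mat_adjoint (A k) + A k * Y * mat_adjoint (A k)" .
  qed
  also have "\<dots> = Dm X + Dm Y" unfolding Dm_def by (rule msum_add) (use X Y in simp_all)
  finally show "Dm (X + Y) = Dm X + Dm Y" .
qed

lemma Dm_one: "Dm (1\<^sub>m n) = 1\<^sub>m n"
proof -
  have "Dm (1\<^sub>m n) = msum n (\<lambda>j. A j * mat_adjoint (A j)) m"
    unfolding Dm_def by (rule msum_cong) simp
  thus ?thesis using un by simp
qed

lemma Cm_one: "Cm (1\<^sub>m n) = 1\<^sub>m n" unfolding Cm_def using UU by simp

end



lemma smult_one_mat: "A \<in> carrier_mat a b \<Longrightarrow> (1::complex) \<cdot>\<^sub>m A = A"
  by (rule eq_matI) (simp_all add: carrier_matD)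

lemma vec_eq_of_minus: "(x::complex vec) \<in> carrier_vec N \<Longrightarrow> y \<in> carrier_vec N \<Longrightarrow> x - y = 0\<^sub>v N \<Longrightarrow> x = y"
proof -
  assume x: "x \<in> carrier_vec N" and y: "y \<in> carrier_vec N" and z: "x - y = 0\<^sub>v N"
  show "x = y"
  proof (rule eq_vecI)
    fix i assume i: "i < dim_vec y"
    hence "(x - y) $ i = 0" using z y by (simp add: carrier_vecD)
    thus "x $ i = y $ i" using i x y by (simp add: carrier_vecD)
  qed (use x y in \<open>simp add: carrier_vecD\<close>)
qed

lemma vminus_self: "(x::complex vec) \<in> carrier_vec N \<Longrightarrow> x - x = 0\<^sub>v N"
  by (rule eq_vecI) (simp_all add: carrier_vecD)

lemma mv_zero: "(M::complex mat) \<in> carrier_mat a N \<Longrightarrow> M *\<^sub>v 0\<^sub>v N = 0\<^sub>v a"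
  by (rule eq_vecI) (simp_all add: carrier_matD scalar_prod_def)

lemma carrier_vec_0: "(v::complex vec) \<in> carrier_vec 0 \<Longrightarrow> v = 0\<^sub>v 0"
  by (rule eq_vecI) (simp_all add: carrier_vecD)

context chan begin

definition Lm :: "real \<Rightarrow> real \<Rightarrow> complex mat \<Rightarrow> complex mat" where
  "Lm p q \<rho> = complex_of_real q \<cdot>\<^sub>m Cm \<rho> + complex_of_real p \<cdot>\<^sub>m Dm \<rho>"

lemma lin_Lm: "lin n (Lm p q)"
  unfolding Lm_def[abs_def] by (rule lin_comb[OF lin_Cm lin_Dm])

lemma Lm_carrier[simp]: "\<rho> \<in> carrier_mat n n \<Longrightarrow> Lm p q \<rho> \<in> carrier_mat n n"
  by (rule linD(1)[OF lin_Lm])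

lemma L_eig_D: assumes r: "\<rho> \<in> carrier_mat n n" and e: "Lm p q \<rho> = c \<cdot>\<^sub>m \<rho>" and c: "cmod c = 1"
  and pq: "0 < p" "0 < q" "p + q = 1"
  shows "Dm \<rho> = c \<cdot>\<^sub>m \<rho>"
proof -
  have nX: "Re (hs (Cm \<rho>) (Cm \<rho>)) = Re (hs \<rho> \<rho>)" using hs_Cm[OF r] by simp
  have eq: "c \<cdot>\<^sub>m \<rho> = complex_of_real q \<cdot>\<^sub>m Cm \<rho> + complex_of_real p \<cdot>\<^sub>m Dm \<rho>" using e unfolding Lm_def by simp
  have CD: "Cm \<rho> = Dm \<rho>" by (rule strict_conv[OF Cm_carrier[OF r] Dm_carrier[OF r] r nX hs_Dm_le[OF r] eq c pq])
  have qp: "complex_of_real q + complex_of_real p = 1" using pq(3) by (metis add.commute of_real_1 of_real_add)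
  have "c \<cdot>\<^sub>m \<rho> = complex_of_real q \<cdot>\<^sub>m Dm \<rho> + complex_of_real p \<cdot>\<^sub>m Dm \<rho>" using eq CD by simp
  also have "\<dots> = Dm \<rho>"
  proof (rule eq_matI)
    fix i j assume "i < dim_row (Dm \<rho>)" "j < dim_col (Dm \<rho>)"
    thus "(complex_of_real q \<cdot>\<^sub>m Dm \<rho> + complex_of_real p \<cdot>\<^sub>m Dm \<rho>) $$ (i,j) = Dm \<rho> $$ (i,j)"
      using qp by (simp add: distrib_right[symmetric])
  qed simp_all
  finally show ?thesis by simp
qed

lemma so_D: "so_matrix n Dm \<in> carrier_mat (n*n) (n*n)" by simp

lemma vecm_one_nz: "0 < n \<Longrightarrow> vecm n (1\<^sub>m n) \<noteq> 0\<^sub>v (n*n)"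
proof
  assume n: "0 < n" and z: "vecm n (1\<^sub>m n) = 0\<^sub>v (n*n)"
  have "vecm n (1\<^sub>m n) $ 0 = 1" using n by simp
  thus False using z n by simp
qed

lemma D_fixed: assumes o: "order 1 (char_poly (so_matrix n Dm)) = 1" and n: "0 < n"
  and r: "\<rho> \<in> carrier_mat n n" and f: "Dm \<rho> = \<rho>"
  shows "\<exists>c. \<rho> = c \<cdot>\<^sub>m 1\<^sub>m n"
proof -
  let ?M = "so_matrix n Dm" let ?K = "char_matrix ?M 1 ^\<^sub>m 1"
  have K: "?K \<in> carrier_mat (n*n) (n*n)" by simp
  have kd: "kernel_dim ?K \<le> 1" by (rule order1_kernel_dim[OF so_D o])
  have inK: "vecm n X \<in> mat_kernel ?K" if X: "X \<in> carrier_mat n n" and fX: "Dm X = X" for X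
  proof (rule mat_kernelI[OF K])
    have "?K *\<^sub>v vecm n X = ?M *\<^sub>v vecm n X - 1 \<cdot>\<^sub>v vecm n X" by (rule cm_pow1[OF so_D vecm_carrier])
    also have "?M *\<^sub>v vecm n X = vecm n X" using bridge[OF lin_Dm X] fX by simp
    finally show "?K *\<^sub>v vecm n X = 0\<^sub>v (n*n)" by simp
  qed simp
  have w: "vecm n (1\<^sub>m n) \<in> mat_kernel ?K" by (rule inK) (simp_all add: Dm_one)
  from kernel_dim_le1_prop[OF K kd w vecm_one_nz[OF n] inK[OF r f]]
  obtain c where "vecm n \<rho> = c \<cdot>\<^sub>v vecm n (1\<^sub>m n)" by blast
  hence "vecm n \<rho> = vecm n (c \<cdot>\<^sub>m 1\<^sub>m n)" by (simp add: vecm_smult)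
  moreover have Y: "c \<cdot>\<^sub>m 1\<^sub>m n \<in> carrier_mat n n" by simp
  ultimately have "\<rho> = c \<cdot>\<^sub>m 1\<^sub>m n" using vecm_inj[OF r Y] by simp
  thus ?thesis by blast
qed

lemma tr_Lm: assumes r: "\<rho> \<in> carrier_mat n n" and pq: "p + q = 1" shows "tr (Lm p q \<rho>) = tr \<rho>"
proof -
  have "tr (Lm p q \<rho>) = tr (complex_of_real q \<cdot>\<^sub>m Cm \<rho>) + tr (complex_of_real p \<cdot>\<^sub>m Dm \<rho>)"
    unfolding Lm_def by (rule tr_add[of _ n]) (use r in simp_all)
  also have "\<dots> = complex_of_real q * tr \<rho> + complex_of_real p * tr \<rho>"
    using r by (simp add: tr_smult[of _ n] tr_Cm tr_Dm)
  also have "\<dots> = (complex_of_real (q + p)) * tr \<rho>" by (simp add: distrib_right)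
  finally show ?thesis using pq by (simp add: add.commute)
qed

lemma part1: assumes r: "\<rho> \<in> carrier_mat n n" "\<rho> \<noteq> 0\<^sub>m n n" and e: "Lm p q \<rho> = c \<cdot>\<^sub>m \<rho>" and c: "cmod c = 1"
  and pq: "0 < p" "0 < q" "p + q = 1"
  and hyp: "\<forall>l. so_eigenvalue n Dm l \<and> cmod l = 1 \<longrightarrow> l = 1"
  shows "c = 1"
proof -
  have "Dm \<rho> = c \<cdot>\<^sub>m \<rho>" by (rule L_eig_D[OF r(1) e c pq])
  hence "so_eigenvalue n Dm c" unfolding so_eigenvalue_def using r by blast
  thus ?thesis using hyp c by blast
qed

lemma part2: assumes o: "order 1 (char_poly (so_matrix n Dm)) = 1"
  and pq: "0 < p" "0 < q" "p + q = 1"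
  shows "order 1 (char_poly (so_matrix n (Lm p q))) = 1"
proof -
  let ?N = "n*n"
  let ?M = "so_matrix n (Lm p q)"
  have M: "?M \<in> carrier_mat ?N ?N" by simp
  have n: "0 < n"
  proof (rule ccontr)
    assume "\<not> 0 < n" hence n0: "n = 0" by simp
    have "poly (char_poly (so_matrix n Dm)) 1 = 0" using o by (simp add: order_root)
    hence "eigenvalue (so_matrix n Dm) 1" using eigenvalue_root_char_poly[OF so_D] by simp
    then obtain v where "eigenvector (so_matrix n Dm) v 1" unfolding eigenvalue_def by blast
    hence "v \<in> carrier_vec 0" "v \<noteq> 0\<^sub>v 0" unfolding eigenvector_def using n0 by simp_all
    thus False using carrier_vec_0 by blast
  qed
  let ?w = "vecm n (1\<^sub>m n)"
  have L1: "Lm p q (1\<^sub>m n) = 1\<^sub>m n"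
  proof -
    have "Lm p q (1\<^sub>m n) = 1 \<cdot>\<^sub>m 1\<^sub>m n"
      unfolding Lm_def Cm_one Dm_one
      by (rule eq_matI) (use pq(3) in \<open>simp_all add: distrib_right[symmetric] of_real_add[symmetric] add.commute\<close>)
    thus ?thesis using smult_one_mat[of "1\<^sub>m n" n n] by simp
  qed
  have Mw: "?M *\<^sub>v ?w = ?w" using bridge[OF lin_Lm[of p q], of "1\<^sub>m n"] L1 by simp
  let ?K = "char_matrix ?M 1 ^\<^sub>m 2"
  have K: "?K \<in> carrier_mat ?N ?N" by simp
  have Kv: "?K *\<^sub>v v = ?M *\<^sub>v (?M *\<^sub>v v - v) - (?M *\<^sub>v v - v)" if v: "v \<in> carrier_vec ?N" for v
    using cm_pow2[OF M v, of 1] by simp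
  have w: "?w \<in> mat_kernel ?K"
    by (rule mat_kernelI[OF K]) (simp_all add: Kv Mw vminus_self[of _ "n*n"] mv_zero[OF M])
  have L_fix: "\<exists>c. \<rho> = c \<cdot>\<^sub>m 1\<^sub>m n" if r: "\<rho> \<in> carrier_mat n n" and f: "Lm p q \<rho> = \<rho>" for \<rho>
  proof -
    have "Lm p q \<rho> = 1 \<cdot>\<^sub>m \<rho>" using f r by (simp add: smult_one_mat)
    from L_eig_D[OF r this _ pq] have "Dm \<rho> = \<rho>" using r by (simp add: smult_one_mat)
    from D_fixed[OF o n r this] show ?thesis .
  qed
  have all: "\<exists>c. v = c \<cdot>\<^sub>v ?w" if v: "v \<in> mat_kernel ?K" for v
  proof -
    have vc: "v \<in> carrier_vec ?N" and kv: "?K *\<^sub>v v = 0\<^sub>v ?N" using mat_kernelD[OF K v] by simp_all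
    define \<rho> where "\<rho> = matv n v"
    have r: "\<rho> \<in> carrier_mat n n" unfolding \<rho>_def by simp
    have vr: "vecm n \<rho> = v" unfolding \<rho>_def by (rule vecm_matv[OF vc])
    define \<sigma> where "\<sigma> = Lm p q \<rho> - \<rho>"
    have s: "\<sigma> \<in> carrier_mat n n" unfolding \<sigma>_def using r by (simp add: minus_carrier_mat)
    have vs: "vecm n \<sigma> = ?M *\<^sub>v v - v" unfolding \<sigma>_def
      using vecm_minus[OF Lm_carrier[OF r] r] bridge[OF lin_Lm[of p q] r] vr by simp
    have c0: "?M *\<^sub>v v \<in> carrier_vec ?N" by (rule mult_mat_vec_carrier[OF M vc])
    have c1: "?M *\<^sub>v v - v \<in> carrier_vec ?N" using c0 vc by simp
    have c2: "?M *\<^sub>v (?M *\<^sub>v v - v) \<in> carrier_vec ?N" by (rule mult_mat_vec_carrier[OF M c1])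
    have "?M *\<^sub>v (?M *\<^sub>v v - v) = ?M *\<^sub>v v - v"
      by (rule vec_eq_of_minus[OF c2 c1]) (use vc kv Kv[OF vc] in simp_all)
    hence "vecm n (Lm p q \<sigma>) = vecm n \<sigma>" using bridge[OF lin_Lm[of p q] s] vs by simp
    hence Ls: "Lm p q \<sigma> = \<sigma>" by (rule vecm_inj[OF Lm_carrier[OF s] s])
    from L_fix[OF s Ls] obtain c where sc: "\<sigma> = c \<cdot>\<^sub>m 1\<^sub>m n" by blast
    have "tr \<sigma> = 0" unfolding \<sigma>_def using tr_minus[of "Lm p q \<rho>" n \<rho>] r tr_Lm[OF r pq(3)] by simp
    moreover have "tr \<sigma> = c * of_nat n" unfolding sc by (simp add: tr_smult[of _ n] tr_one)
    ultimately have "c = 0" using n by simp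
    moreover have "(0::complex) \<cdot>\<^sub>m 1\<^sub>m n = 0\<^sub>m n n" by (rule eq_matI) simp_all
    ultimately have "Lm p q \<rho> - \<rho> = 0\<^sub>m n n" using sc unfolding \<sigma>_def by simp
    hence "Lm p q \<rho> = \<rho>" by (rule mat_eq_of_minus_zero[OF Lm_carrier[OF r] r])
    from L_fix[OF r this] obtain d where "\<rho> = d \<cdot>\<^sub>m 1\<^sub>m n" by blast
    hence "v = d \<cdot>\<^sub>v ?w" using vr vecm_smult[of "1\<^sub>m n" n d] by simp
    thus ?thesis by blast
  qed
  have "kernel_dim ?K \<le> 1" by (rule prop_kernel_dim_le1[OF K w all])
  hence le: "order 1 (char_poly ?M) \<le> 1" by (rule kernel_dim2_order[OF M])
  have "eigenvector ?M ?w 1" unfolding eigenvector_def using Mw vecm_one_nz[OF n] by simp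
  hence "eigenvalue ?M 1" unfolding eigenvalue_def by blast
  hence "poly (char_poly ?M) 1 = 0" using eigenvalue_root_char_poly[OF M] by simp
  moreover have "char_poly ?M \<noteq> 0" using degree_monic_char_poly[OF M] by auto
  ultimately have "order 1 (char_poly ?M) \<noteq> 0" by (simp add: order_root)
  with le show ?thesis by simp
qed

end

theorem mainTheorem5:
  fixes n m :: nat and U :: "complex mat" and A :: "nat \<Rightarrow> complex mat"
    and p q :: real and C D L :: "complex mat \<Rightarrow> complex mat"
  assumes U: "unitary_op n U"
    and A_carrier: "\<forall>j<m. A j \<in> carrier_mat n n"
    and A_tp: "msum n (\<lambda>j. mat_adjoint (A j) * A j) m = 1\<^sub>m n"
    and A_unital: "msum n (\<lambda>j. A j * mat_adjoint (A j)) m = 1\<^sub>m n"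
    and pq: "0 < p" "p < 1" "0 < q" "q < 1" "p + q = 1"
    and C_def: "C = (\<lambda>\<rho>. U * \<rho> * mat_adjoint U)"
    and D_def: "D = (\<lambda>\<rho>. msum n (\<lambda>j. A j * \<rho> * mat_adjoint (A j)) m)"
    and L_def: "L = (\<lambda>\<rho>. complex_of_real q \<cdot>\<^sub>m C \<rho> + complex_of_real p \<cdot>\<^sub>m D \<rho>)"
  shows "((\<forall>l. so_eigenvalue n D l \<and> cmod l = 1 \<longrightarrow> l = 1)
            \<longrightarrow> (\<forall>l. so_eigenvalue n L l \<and> cmod l = 1 \<longrightarrow> l = 1))
         \<and> (alg_mult n D 1 = 1 \<longrightarrow> alg_mult n L 1 = 1)"
proof -
  interpret chan n m U A by (rule chan.intro) (fact U, fact A_carrier, fact A_tp, fact A_unital)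
  have Ceq: "C = Cm" unfolding C_def Cm_def[abs_def] ..
  have Deq: "D = Dm" unfolding D_def Dm_def[abs_def] ..
  have Leq: "L = Lm p q" unfolding L_def Lm_def[abs_def] Ceq Deq ..
  show ?thesis
  proof (intro conjI impI allI)
    fix l assume hyp: "\<forall>l. so_eigenvalue n D l \<and> cmod l = 1 \<longrightarrow> l = 1"
      and ev: "so_eigenvalue n L l \<and> cmod l = 1"
    from ev obtain \<rho> where r: "\<rho> \<in> carrier_mat n n" "\<rho> \<noteq> 0\<^sub>m n n" and e: "L \<rho> = l \<cdot>\<^sub>m \<rho>"
      unfolding so_eigenvalue_def by blast
    show "l = 1"
      by (rule part1[OF r e[unfolded Leq] _ pq(1) pq(3) pq(5)]) (use ev hyp Deq in simp_all)
  next
    assume "alg_mult n D 1 = 1"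
    hence o: "order 1 (char_poly (so_matrix n Dm)) = 1" unfolding alg_mult_def Deq .
    show "alg_mult n L 1 = 1" unfolding alg_mult_def Leq by (rule part2[OF o pq(1) pq(3) pq(5)])
  qed
qed

end
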